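(* Let $\langle T,\le\rangle$ be a temporal flow. Then for every formula $\varphi$ and every finite set of formulas $\Gamma$, $\Gamma\vdash_{\mathrm{NM}}\varphi$ if and only if $\Gamma\models_T\varphi$.
   Context: A temporal flow is a totally ordered infinite set $\langle T,\le\rangle$. Formulas are built from a denumerable set of propositional variables and $\bot$ using $\neg$ and $\to$ (in NM, $\neg\varphi$ is $\varphi\to\bot$, and the other NM connectives $\&,\land,\vee$ are definable from $\neg,\to$). NM (Nilpotent Minimum logic) is the logic MTL (axioms: $(\varphi\to\psi)\to((\psi\to\chi)\to(\varphi\to\chi))$; $(\varphi\&\psi)\to\varphi$; $(\varphi\&\psi)\to(\psi\&\varphi)$; $(\varphi\land\psi)\to\varphi$; $(\varphi\land\psi)\to(\psi\land\varphi)$; $(\varphi\&(\varphi\to\psi))\to(\psi\land\varphi)$; $(\varphi\to(\psi\to\chi))\to((\varphi\&\psi)\to\chi)$; $((\varphi\&\psi)\to\chi)\to(\varphi\to(\psi\to\chi))$; $((\varphi\to\psi)\to\chi)\to(((\psi\to\varphi)\to\chi)\to\chi)$; $\bot\to\varphi$; rule modus ponens) extended by $\neg\neg\varphi\to\varphi$ and $\neg(\varphi\&\psi)\vee((\varphi\land\psi)\to(\varphi\&\psi))$, where $\varphi\vee\psi$ is $((\varphi\to\psi)\to\psi)\land((\psi\to\varphi)\to\varphi)$. Let $T'=T\cup\{-\infty\}$ and $T''=(T'\times\{0,1\})\cup\{\langle-\infty,\frac12\rangle\}$, totally ordered by: for $t<t'$ in $T$, $\langle-\infty,0\rangle<\langle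 t,0\rangle<\langle t',0\rangle<\langle-\infty,\frac12\rangle<\langle t',1\rangle<\langle t,1\rangle<\langle-\infty,1\rangle$. A function $f:T\to\{0,\frac12,1\}$ is admissible if it is constant, or there exist $i\in\{0,1\}$ and $t\in T$ (not the minimum of $T$, if $T$ has one) with $f(t')=i$ for $t'\ge t$ and $f(t'')=\frac12$ for $t''<t$; set $d(f)=\langle-\infty,c\rangle$ if $f$ is constant with value $c$, and $d(f)=\langle t,i\rangle$ in the second case. A temporal assignment is $v:VAR\times T\to\{0,\frac12,1\}$ with every $v(x,\cdot)$ admissible. The map $s^v$ from formulas to $T''$ is: $s^v(x)=d(v(x,\cdot))$; $s^v(\bot)=\langle-\infty,0\rangle$; if $s^v(\varphi)=\langle a,m\rangle$ then $s^v(\neg\varphi)=\langle a,1-m\rangle$; $s^v(\varphi\to\psi)=\langle-\infty,1\rangle$ if $s^v(\varphi)\le s^v(\psi)$, else the maximum of $s^v(\neg\varphi)$ and $s^v(\psi)$ in $T''$. $\Gamma\models_T\varphi$ means: for every temporal assignment $v$ on $T$ with $s^v(\psi)=\langle-\infty,1\rangle$ for all $\psi\in\Gamma$, also $s^v(\varphi)=\langle-\infty,1\rangle$. *)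

theory Defs
  imports Main
begin

datatype fm = Var nat | Bot | Imp fm fm

definition Neg :: "fm \<Rightarrow> fm" where
  "Neg \<phi> = Imp \<phi> Bot"

text \<open>Strong conjunction (NM is involutive): phi & psi := ~(phi -> ~psi).\<close>
definition Conj :: "fm \<Rightarrow> fm \<Rightarrow> fm" where
  "Conj \<phi> \<psi> = Neg (Imp \<phi> (Neg \<psi>))"

text \<open>Weak conjunction (lattice meet), definable in NM from -> and ~:
  with A := (phi->psi)->~phi and B := (psi->phi)->~psi, phi /\ psi := (A->B)->~A.\<close>
definition Wedge :: "fm \<Rightarrow> fm \<Rightarrow> fm" where
  "Wedge \<phi> \<psi> =
     (let A = Imp (Imp \<phi> \<psi>) (Neg \<phi>); B = Imp (Imp \<psi> \<phi>) (Neg \<psi>)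
      in Imp (Imp A B) (Neg A))"

definition Vee :: "fm \<Rightarrow> fm \<Rightarrow> fm" where
  "Vee \<phi> \<psi> = Wedge (Imp (Imp \<phi> \<psi>) \<psi>) (Imp (Imp \<psi> \<phi>) \<phi>)"

inductive nm_axiom :: "fm \<Rightarrow> bool" where
  A1: "nm_axiom (Imp (Imp \<phi> \<psi>) (Imp (Imp \<psi> \<chi>) (Imp \<phi> \<chi>)))"
| A2: "nm_axiom (Imp (Conj \<phi> \<psi>) \<phi>)"
| A3: "nm_axiom (Imp (Conj \<phi> \<psi>) (Conj \<psi> \<phi>))"
| A4: "nm_axiom (Imp (Wedge \<phi> \<psi>) \<phi>)"
| A5: "nm_axiom (Imp (Wedge \<phi> \<psi>) (Wedge \<psi> \<phi>))"
| A6: "nm_axiom (Imp (Conj \<phi> (Imp \<phi> \<psi>)) (Wedge \<psi> \<phi>))"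
| A7a: "nm_axiom (Imp (Imp \<phi> (Imp \<psi> \<chi>)) (Imp (Conj \<phi> \<psi>) \<chi>))"
| A7b: "nm_axiom (Imp (Imp (Conj \<phi> \<psi>) \<chi>) (Imp \<phi> (Imp \<psi> \<chi>)))"
| A8: "nm_axiom (Imp (Imp (Imp \<phi> \<psi>) \<chi>) (Imp (Imp (Imp \<psi> \<phi>) \<chi>) \<chi>))"
| A9: "nm_axiom (Imp Bot \<phi>)"
| Inv: "nm_axiom (Imp (Neg (Neg \<phi>)) \<phi>)"
| NMax: "nm_axiom (Vee (Neg (Conj \<phi> \<psi>)) (Imp (Wedge \<phi> \<psi>) (Conj \<phi> \<psi>)))"

inductive nm_deriv :: "fm set \<Rightarrow> fm \<Rightarrow> bool" where
  hyp: "\<phi> \<in> \<Gamma> \<Longrightarrow> nm_deriv \<Gamma> \<phi>"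
| ax: "nm_axiom \<phi> \<Longrightarrow> nm_deriv \<Gamma> \<phi>"
| mp: "nm_deriv \<Gamma> \<phi> \<Longrightarrow> nm_deriv \<Gamma> (Imp \<phi> \<psi>) \<Longrightarrow> nm_deriv \<Gamma> \<psi>"

datatype tri = Zero | Half | One

fun tri_neg :: "tri \<Rightarrow> tri" where
  "tri_neg Zero = One" | "tri_neg Half = Half" | "tri_neg One = Zero"

text \<open>Elements of T'' are pairs (a, m) with a in T' = T + {-infinity}
  (None represents -infinity, Some t represents t) and m in {0,1/2,1};
  the value 1/2 only occurs with a = -infinity.\<close>
type_synonym 'a tval = "'a option \<times> tri"

fun opt_le :: "'a::linorder option \<Rightarrow> 'a option \<Rightarrow> bool" where
  "opt_le None _ = True"
| "opt_le (Some _) None = False"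
| "opt_le (Some s) (Some t) = (s \<le> t)"

fun tri_rank :: "tri \<Rightarrow> nat" where
  "tri_rank Zero = 0" | "tri_rank Half = 1" | "tri_rank One = 2"

text \<open>The order of T'':
  <-inf,0> < <t,0> < <t',0> < <-inf,1/2> < <t',1> < <t,1> < <-inf,1> for t < t'.\<close>
definition tle :: "'a::linorder tval \<Rightarrow> 'a tval \<Rightarrow> bool" where
  "tle p q =
     (if snd p = snd q then
        (if snd p = One then opt_le (fst q) (fst p) else opt_le (fst p) (fst q))
      else tri_rank (snd p) < tri_rank (snd q))"

definition tmax :: "'a::linorder tval \<Rightarrow> 'a tval \<Rightarrow> 'a tval" where
  "tmax p q = (if tle p q then q else p)"

definition tneg :: "'a tval \<Rightarrow> 'a tval" where
  "tneg p = (fst p, tri_neg (snd p))"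

definition admissible :: "('a::linorder \<Rightarrow> tri) \<Rightarrow> bool" where
  "admissible f \<longleftrightarrow>
     (\<exists>c. \<forall>t. f t = c) \<or>
     (\<exists>i t. i \<in> {Zero, One} \<and> (\<exists>t'. t' < t) \<and>
            (\<forall>t'. t \<le> t' \<longrightarrow> f t' = i) \<and> (\<forall>t''. t'' < t \<longrightarrow> f t'' = Half))"

definition dval :: "('a::linorder \<Rightarrow> tri) \<Rightarrow> 'a tval" where
  "dval f =
     (if \<exists>c. \<forall>t. f t = c then (None, THE c. \<forall>t. f t = c)
      else (THE p. \<exists>i t. p = (Some t, i) \<and> i \<in> {Zero, One} \<and> (\<exists>t'. t' < t) \<and>
               (\<forall>t'. t \<le> t' \<longrightarrow> f t' = i) \<and> (\<forall>t''. t'' < t \<longrightarrow> f t'' = Half)))"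

definition temporal_assignment :: "(nat \<Rightarrow> 'a::linorder \<Rightarrow> tri) \<Rightarrow> bool" where
  "temporal_assignment v \<longleftrightarrow> (\<forall>x. admissible (v x))"

text \<open>s^v. The clause for negation, s^v(~phi) = <a,1-m>, is used via tneg; since
  ~phi abbreviates phi -> Bot, the implication clause yields exactly this value.\<close>
fun sv :: "(nat \<Rightarrow> 'a::linorder \<Rightarrow> tri) \<Rightarrow> fm \<Rightarrow> 'a tval" where
  "sv v (Var x) = dval (v x)"
| "sv v Bot = (None, Zero)"
| "sv v (Imp \<phi> \<psi>) =
     (if tle (sv v \<phi>) (sv v \<psi>) then (None, One)
      else tmax (tneg (sv v \<phi>)) (sv v \<psi>))"

definition temporal_models :: "'a::linorder itself \<Rightarrow> fm set \<Rightarrow> fm \<Rightarrow> bool" where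
  "temporal_models T \<Gamma> \<phi> \<longleftrightarrow>
     (\<forall>v :: nat \<Rightarrow> 'a \<Rightarrow> tri. temporal_assignment v \<longrightarrow>
        (\<forall>\<psi>\<in>\<Gamma>. sv v \<psi> = (None, One)) \<longrightarrow> sv v \<phi> = (None, One))"

end

theory Submission
  imports Defs
begin

abbreviation Top :: fm where "Top \<equiv> Imp Bot Bot"

lemma axI: "nm_axiom a \<Longrightarrow> nm_deriv D a" by (rule nm_deriv.ax)

lemma mpI: "nm_deriv D (Imp a b) \<Longrightarrow> nm_deriv D a \<Longrightarrow> nm_deriv D b"
  by (rule nm_deriv.mp)

lemma comp: "nm_deriv D (Imp a b) \<Longrightarrow> nm_deriv D (Imp b c) \<Longrightarrow> nm_deriv D (Imp a c)"
  by (meson mpI axI nm_axiom.A1)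

lemma r7a: "nm_deriv D (Imp a (Imp b c)) \<Longrightarrow> nm_deriv D (Imp (Conj a b) c)"
  by (meson mpI axI nm_axiom.A7a)

lemma r7b: "nm_deriv D (Imp (Conj a b) c) \<Longrightarrow> nm_deriv D (Imp a (Imp b c))"
  by (meson mpI axI nm_axiom.A7b)

lemma K: "nm_deriv D (Imp a (Imp b a))"
  by (rule r7b, rule axI, rule nm_axiom.A2)

lemma topD: "nm_deriv D Top" by (rule axI, rule nm_axiom.A9)

lemma idt: "nm_deriv D (Imp a a)"
proof -
  have 1: "nm_deriv D (Imp a (Imp Top a))" by (rule K)
  have "nm_deriv D (Imp (Conj Top (Imp Top a)) (Wedge a Top))" by (rule axI, rule nm_axiom.A6)
  moreover have "nm_deriv D (Imp (Wedge a Top) a)" by (rule axI, rule nm_axiom.A4)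
  ultimately have "nm_deriv D (Imp (Conj Top (Imp Top a)) a)" by (rule comp)
  then have "nm_deriv D (Imp Top (Imp (Imp Top a) a))" by (rule r7b)
  then have "nm_deriv D (Imp (Imp Top a) a)" using topD mpI by blast
  with 1 show ?thesis by (rule comp)
qed

lemma exch: "nm_deriv D (Imp a (Imp b c)) \<Longrightarrow> nm_deriv D (Imp b (Imp a c))"
proof -
  assume "nm_deriv D (Imp a (Imp b c))"
  then have "nm_deriv D (Imp (Conj a b) c)" by (rule r7a)
  moreover have "nm_deriv D (Imp (Conj b a) (Conj a b))" by (rule axI, rule nm_axiom.A3)
  ultimately have "nm_deriv D (Imp (Conj b a) c)" using comp by blast
  then show ?thesis by (rule r7b)
qed

lemma suffix: "nm_deriv D (Imp a b) \<Longrightarrow> nm_deriv D (Imp (Imp b c) (Imp a c))"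
  by (meson mpI axI nm_axiom.A1)

lemma prefix: "nm_deriv D (Imp a b) \<Longrightarrow> nm_deriv D (Imp (Imp c a) (Imp c b))"
proof -
  assume "nm_deriv D (Imp a b)"
  moreover have "nm_deriv D (Imp (Imp a b) (Imp (Imp c a) (Imp c b)))"
    by (rule exch, rule axI, rule nm_axiom.A1)
  ultimately show ?thesis using mpI by blast
qed

lemma exchT: "nm_deriv D (Imp (Imp a (Imp b c)) (Imp b (Imp a c)))"
proof -
  have 1: "nm_deriv D (Imp (Imp a (Imp b c)) (Imp (Conj a b) c))" by (rule axI, rule nm_axiom.A7a)
  have "nm_deriv D (Imp (Conj b a) (Conj a b))" by (rule axI, rule nm_axiom.A3)
  then have 2: "nm_deriv D (Imp (Imp (Conj a b) c) (Imp (Conj b a) c))" by (rule suffix)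
  have 3: "nm_deriv D (Imp (Imp (Conj b a) c) (Imp b (Imp a c)))" by (rule axI, rule nm_axiom.A7b)
  show ?thesis by (rule comp[OF comp[OF 1 2] 3])
qed

lemma weak: "nm_deriv D a \<Longrightarrow> nm_deriv D (Imp b a)"
  using K mpI by blast

lemma deriv_mono: "nm_deriv D a \<Longrightarrow> D \<subseteq> D' \<Longrightarrow> nm_deriv D' a"
  by (induction rule: nm_deriv.induct) (auto intro: nm_deriv.intros)

fun impn :: "fm \<Rightarrow> nat \<Rightarrow> fm \<Rightarrow> fm" where
  "impn t 0 c = c"
| "impn t (Suc n) c = Imp t (impn t n c)"

lemma impn_add: "impn t n (impn t m c) = impn t (n + m) c"
  by (induction n) auto

lemma impn_mono: "nm_deriv D (Imp a b) \<Longrightarrow> nm_deriv D (Imp (impn t n a) (impn t n b))"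
  by (induction n) (auto intro: prefix)

lemma impn_weak: "nm_deriv D a \<Longrightarrow> nm_deriv D (impn t n a)"
  by (induction n) (auto intro: weak)

lemma impn_exch: "nm_deriv D (Imp (impn t n (Imp b c)) (Imp b (impn t n c)))"
proof (induction n)
  case 0 then show ?case by (simp add: idt)
next
  case (Suc n)
  then have "nm_deriv D (Imp (Imp t (impn t n (Imp b c))) (Imp t (Imp b (impn t n c))))"
    by (rule prefix)
  then show ?case using exchT comp by (simp; blast)
qed

lemma DT: "nm_deriv G c \<Longrightarrow> G = insert t D \<Longrightarrow> \<exists>n. nm_deriv D (impn t n c)"
proof (induction rule: nm_deriv.induct)
  case (hyp \<phi> \<Gamma>)
  then show ?case
  proof (cases "\<phi> = t")
    case True
    then have "nm_deriv D (impn t 1 \<phi>)" by (simp add: idt)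
    then show ?thesis by blast
  next
    case False
    with hyp have "nm_deriv D (impn t 0 \<phi>)" by (auto intro: nm_deriv.hyp)
    then show ?thesis by blast
  qed
next
  case (ax \<phi> \<Gamma>)
  then have "nm_deriv D (impn t 0 \<phi>)" by (auto intro: nm_deriv.ax)
  then show ?case by blast
next
  case (mp \<Gamma> a b)
  then obtain n m where n: "nm_deriv D (impn t n a)" and m: "nm_deriv D (impn t m (Imp a b))" by blast
  have "nm_deriv D (Imp a (impn t m b))" using m impn_exch mpI by blast
  then have "nm_deriv D (Imp (impn t n a) (impn t n (impn t m b)))" by (rule impn_mono)
  then have "nm_deriv D (impn t (n+m) b)" using n mpI impn_add by metis
  then show ?case by blast
qed

lemma chi_impn: "nm_deriv D (Imp c (impn t j c))"
proof (induction j)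
  case 0 then show ?case by (simp add: idt)
next
  case (Suc j) then show ?case using K comp by (simp; blast)
qed

lemma impn_lift: "nm_deriv D (impn t k c) \<Longrightarrow> k \<le> i \<Longrightarrow> nm_deriv D (impn t i c)"
proof -
  assume "nm_deriv D (impn t k c)" "k \<le> i"
  then have "nm_deriv D (impn t (i-k) (impn t k c))" using impn_weak by blast
  then show ?thesis using \<open>k \<le> i\<close> by (simp add: impn_add)
qed

lemma prelin_pow:
  assumes a: "nm_deriv D (impn (Imp x y) k c)" and b: "nm_deriv D (impn (Imp y x) k c)"
  shows "nm_deriv D c"
proof -
  define X where "X i j = impn (Imp x y) i (impn (Imp y x) j c)" for i j
  have main: "nm_deriv D (X i j)" for i j
  proof (induction "2*k - (i+j)" arbitrary: i j rule: less_induct)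
    case less
    show ?case
    proof (cases "k \<le> i \<or> k \<le> j")
      case True
      then show ?thesis
      proof
        assume "k \<le> i"
        have "nm_deriv D (impn (Imp x y) k (impn (Imp y x) j c))"
          using impn_mono[OF chi_impn] a mpI by blast
        then show ?thesis unfolding X_def using \<open>k \<le> i\<close> impn_lift by blast
      next
        assume "k \<le> j"
        then have "nm_deriv D (impn (Imp y x) j c)" using b impn_lift by blast
        then show ?thesis unfolding X_def by (rule impn_weak)
      qed
    next
      case False
      then have 1: "nm_deriv D (X (Suc i) j)" "nm_deriv D (X i (Suc j))"
        using less by auto
      then have h1: "nm_deriv D (Imp (Imp x y) (X i j))" by (simp add: X_def)
      have h2: "nm_deriv D (Imp (Imp y x) (X i j))"
        using 1(2) impn_exch mpI unfolding X_def by fastforce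
      have "nm_deriv D (Imp (Imp (Imp x y) (X i j)) (Imp (Imp (Imp y x) (X i j)) (X i j)))"
        by (rule axI, rule nm_axiom.A8)
      then show ?thesis using h1 h2 mpI by blast
    qed
  qed
  show ?thesis using main[of 0 0] by (simp add: X_def)
qed


lemma compact: "nm_deriv G c \<Longrightarrow> \<exists>F. finite F \<and> F \<subseteq> G \<and> nm_deriv F c"
proof (induction rule: nm_deriv.induct)
  case (hyp \<phi> \<Gamma>)
  then show ?case by (intro exI[of _ "{\<phi>}"]) (auto intro: nm_deriv.hyp)
next
  case (ax \<phi> \<Gamma>)
  then show ?case by (intro exI[of _ "{}"]) (auto intro: nm_deriv.ax)
next
  case (mp \<Gamma> a b)
  then obtain F1 F2 where "finite F1" "F1 \<subseteq> \<Gamma>" "nm_deriv F1 a" "finite F2" "F2 \<subseteq> \<Gamma>" "nm_deriv F2 (Imp a b)"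
    by blast
  then show ?case
  proof (intro exI conjI)
    show "finite (F1 \<union> F2)" using \<open>finite F1\<close> \<open>finite F2\<close> by simp
    show "F1 \<union> F2 \<subseteq> \<Gamma>" using \<open>F1 \<subseteq> \<Gamma>\<close> \<open>F2 \<subseteq> \<Gamma>\<close> by simp
    have "nm_deriv (F1 \<union> F2) a" using \<open>nm_deriv F1 a\<close> deriv_mono by blast
    moreover have "nm_deriv (F1 \<union> F2) (Imp a b)" using \<open>nm_deriv F2 (Imp a b)\<close> deriv_mono by blast
    ultimately show "nm_deriv (F1 \<union> F2) b" using mpI by blast
  qed
qed

lemma maximal:
  assumes "\<not> nm_deriv G c"
  shows "\<exists>D. G \<subseteq> D \<and> \<not> nm_deriv D c \<and> (\<forall>D'. D \<subseteq> D' \<and> \<not> nm_deriv D' c \<longrightarrow> D' = D)"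
proof -
  let ?A = "{D. G \<subseteq> D \<and> \<not> nm_deriv D c}"
  have "\<exists>M\<in>?A. \<forall>X\<in>?A. M \<subseteq> X \<longrightarrow> X = M"
  proof (rule subset_Zorn_nonempty)
    have "G \<in> ?A" using assms by simp
    then show "?A \<noteq> {}" by (rule ex_in_conv[THEN iffD1, OF exI])
  next
    fix C assume C: "C \<noteq> {}" "subset.chain ?A C"
    have "\<not> nm_deriv (\<Union>C) c"
    proof
      assume "nm_deriv (\<Union>C) c"
      then obtain F where F: "finite F" "F \<subseteq> \<Union>C" "nm_deriv F c" using compact by blast
      then obtain B where "B \<in> C" "F \<subseteq> B" using finite_subset_Union_chain[OF F(1) F(2) C(1) C(2)] by blast
      then have "nm_deriv B c" using F(3) deriv_mono by blast
      moreover have "B \<in> ?A" using \<open>B \<in> C\<close> C(2) unfolding subset_chain_def by (meson subsetD)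
      ultimately show False by blast
    qed
    moreover have "G \<subseteq> \<Union>C"
    proof -
      obtain X where "X \<in> C" using C(1) by blast
      then have "X \<in> ?A" using C(2) unfolding subset_chain_def by (meson subsetD)
      then show ?thesis using \<open>X \<in> C\<close> by blast
    qed
    ultimately show "\<Union>C \<in> ?A" by simp
  qed
  then obtain M where "M \<in> ?A" "\<forall>X\<in>?A. M \<subseteq> X \<longrightarrow> X = M" by blast
  then show ?thesis by (intro exI[of _ M]) auto
qed

lemma maximal_linear:
  assumes G: "\<not> nm_deriv D c" and mx: "\<forall>D'. D \<subseteq> D' \<and> \<not> nm_deriv D' c \<longrightarrow> D' = D"
  shows "nm_deriv D (Imp a b) \<or> nm_deriv D (Imp b a)"
proof (rule ccontr)
  assume n: "\<not> (nm_deriv D (Imp a b) \<or> nm_deriv D (Imp b a))"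
  have "insert (Imp a b) D \<noteq> D" using n nm_deriv.hyp by blast
  then have "nm_deriv (insert (Imp a b) D) c" using mx by blast
  then obtain n1 where 1: "nm_deriv D (impn (Imp a b) n1 c)" using DT by blast
  have "insert (Imp b a) D \<noteq> D" using n nm_deriv.hyp by blast
  then have "nm_deriv (insert (Imp b a) D) c" using mx by blast
  then obtain n2 where 2: "nm_deriv D (impn (Imp b a) n2 c)" using DT by blast
  have "nm_deriv D (impn (Imp a b) (max n1 n2) c)" using 1 impn_lift by simp
  moreover have "nm_deriv D (impn (Imp b a) (max n1 n2) c)" using 2 impn_lift by simp
  ultimately have "nm_deriv D c" by (rule prelin_pow)
  with G show False by blast
qed

locale lin =
  fixes D :: "fm set"
  assumes lin: "nm_deriv D (Imp a b) \<or> nm_deriv D (Imp b a)"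
    and cons: "\<not> nm_deriv D Bot"
begin

definition le :: "fm \<Rightarrow> fm \<Rightarrow> bool" where "le a b = nm_deriv D (Imp a b)"

lemma le_lin: "le a b \<or> le b a" using lin by (simp add: le_def)
lemma le_refl[simp]: "le a a" by (simp add: le_def idt)
lemma le_trans: "le a b \<Longrightarrow> le b c \<Longrightarrow> le a c" unfolding le_def by (rule comp)
lemma le_Bot[simp]: "le Bot a" unfolding le_def by (rule axI, rule nm_axiom.A9)
lemma le_Top[simp]: "le a Top" unfolding le_def by (rule weak, rule topD)
lemma prov_iff: "nm_deriv D a \<longleftrightarrow> le Top a"
  unfolding le_def using weak mpI topD by blast
lemma not_Top_Bot: "\<not> le Top Bot" using cons prov_iff by blast
lemma neg_anti: "le a b \<Longrightarrow> le (Neg b) (Neg a)"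
  unfolding le_def Neg_def by (meson mpI axI nm_axiom.A1)
lemma nn1: "le (Neg (Neg a)) a" unfolding le_def by (rule axI, rule nm_axiom.Inv)
lemma nn2: "le a (Neg (Neg a))" unfolding le_def Neg_def by (rule exch, rule idt)
lemma negTop: "Neg Bot = Top" by (simp add: Neg_def)

lemma prime: "nm_deriv D (Vee p q) \<Longrightarrow> nm_deriv D p \<or> nm_deriv D q"
proof -
  assume v: "nm_deriv D (Vee p q)"
  show ?thesis
  proof (cases "le p q")
    case True
    have "nm_deriv D (Imp (Vee p q) (Imp (Imp p q) q))" unfolding Vee_def by (rule axI, rule nm_axiom.A4)
    then have "nm_deriv D (Imp (Imp p q) q)" using v mpI by blast
    then show ?thesis using True mpI unfolding le_def by blast
  next
    case False
    then have pq: "le q p" using le_lin by blast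
    have "nm_deriv D (Imp (Vee p q) (Wedge (Imp (Imp q p) p) (Imp (Imp p q) q)))"
      unfolding Vee_def by (rule axI, rule nm_axiom.A5)
    moreover have "nm_deriv D (Imp (Wedge (Imp (Imp q p) p) (Imp (Imp p q) q)) (Imp (Imp q p) p))"
      by (rule axI, rule nm_axiom.A4)
    ultimately have "nm_deriv D (Imp (Imp q p) p)" using v mpI comp by blast
    then show ?thesis using pq mpI unfolding le_def by blast
  qed
qed

lemma wedge_lemma: "le x y \<Longrightarrow> le x (Wedge y x)"
proof -
  assume "le x y"
  have "nm_deriv D (Imp x (Imp (Imp x y) (Conj x (Imp x y))))" by (rule r7b, rule idt)
  then have "nm_deriv D (Imp (Imp x y) (Imp x (Conj x (Imp x y))))" by (rule exch)
  then have "nm_deriv D (Imp x (Conj x (Imp x y)))" using \<open>le x y\<close> mpI unfolding le_def by blast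
  moreover have "nm_deriv D (Imp (Conj x (Imp x y)) (Wedge y x))" by (rule axI, rule nm_axiom.A6)
  ultimately show ?thesis unfolding le_def by (rule comp)
qed

lemma le_neg_imp: "le (Neg a) (Imp a b)"
  unfolding le_def Neg_def by (rule prefix, rule axI, rule nm_axiom.A9)
lemma le_imp: "le b (Imp a b)" unfolding le_def by (rule K)

lemma imp_max: assumes "\<not> le a b" shows "le (Imp a b) (Neg a) \<or> le (Imp a b) b"
proof -
  let ?t = "Imp a b"
  have tb: "le (Conj ?t a) b" unfolding le_def by (rule r7a, rule idt)
  have "nm_deriv D (Vee (Neg (Conj ?t a)) (Imp (Wedge ?t a) (Conj ?t a)))" by (rule axI, rule nm_axiom.NMax)
  then have "nm_deriv D (Neg (Conj ?t a)) \<or> nm_deriv D (Imp (Wedge ?t a) (Conj ?t a))" by (rule prime)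
  then show ?thesis
  proof
    assume "nm_deriv D (Neg (Conj ?t a))"
    then have "le ?t (Neg a)" unfolding le_def Neg_def by (rule r7b)
    then show ?thesis by blast
  next
    assume w: "nm_deriv D (Imp (Wedge ?t a) (Conj ?t a))"
    then have wb: "le (Wedge ?t a) b" using tb le_trans unfolding le_def by blast
    show ?thesis
    proof (cases "le a ?t")
      case True
      then have "le a (Wedge ?t a)" by (rule wedge_lemma)
      then have "le a b" using wb le_trans by blast
      with assms show ?thesis by blast
    next
      case False
      then have "le ?t a" using le_lin by blast
      then have "le ?t (Wedge a ?t)" by (rule wedge_lemma)
      moreover have "le (Wedge a ?t) (Wedge ?t a)" unfolding le_def by (rule axI, rule nm_axiom.A5)
      ultimately show ?thesis using wb le_trans by blast
    qed
  qed
qed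

end


locale nmc =
  fixes N :: "'b::linorder \<Rightarrow> 'b" and B :: 'b
  assumes NN[simp]: "N (N x) = x" and Nanti: "x \<le> y \<Longrightarrow> N y \<le> N x" and Bmin: "B \<le> x"
begin

lemma Nle[simp]: "N x \<le> N y \<longleftrightarrow> y \<le> x"
  by (metis NN Nanti)
lemma Nless[simp]: "N x < N y \<longleftrightarrow> y < x"
  by (simp add: less_le_not_le)
lemma Neq[simp]: "N x = N y \<longleftrightarrow> x = y" by (metis NN)
lemma Tmax[simp]: "x \<le> N B" using Bmin[of "N x"] Nle by (metis NN)
lemma Bmin'[simp]: "B \<le> x" by (rule Bmin)

lemma leB[simp]: "x \<le> B \<longleftrightarrow> x = B" using Bmin' order_antisym by blast
lemma Tle[simp]: "N B \<le> x \<longleftrightarrow> x = N B" using Tmax order_antisym by blast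
lemma NeqB[simp]: "N x = B \<longleftrightarrow> x = N B" by (metis NN)
lemma NeqT[simp]: "N x = N B \<longleftrightarrow> x = B" by (metis NN)

definition I :: "'b \<Rightarrow> 'b \<Rightarrow> 'b" where
  "I x y = (if x \<le> y then N B else max (N x) y)"

lemma I_top: "I x y = N B \<longleftrightarrow> x \<le> y"
  unfolding I_def max_def
  by (metis NN Neq Tmax le_cases order_antisym Bmin')

lemma N_max: "N (max a b) = min (N a) (N b)"
  by (cases "a \<le> b") (auto simp: max_def min_def)
lemma N_min: "N (min a b) = max (N a) (N b)"
  by (cases "a \<le> b") (auto simp: max_def min_def)

definition C :: "'b \<Rightarrow> 'b \<Rightarrow> 'b" where "C x y = N (I x (N y))"

lemma C_eq: "C x y = (if x \<le> N y then B else min x y)"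
  unfolding C_def I_def by (simp add: N_max)

lemma I_lt: "\<not> x \<le> y \<Longrightarrow> I x y = max (N x) y" by (simp add: I_def)
lemma I_le: "x \<le> y \<Longrightarrow> I x y = N B" by (simp add: I_def)

definition W :: "'b \<Rightarrow> 'b \<Rightarrow> 'b" where
  "W x y = (let A = I (I x y) (N x); Bb = I (I y x) (N y) in I (I A Bb) (N A))"

lemma IT[simp]: "I (N B) z = z"
  unfolding I_def by (auto simp: max_def intro: order_antisym)
lemma Irefl[simp]: "I z z = N B" by (simp add: I_def)
lemma IB[simp]: "I z B = N z"
  unfolding I_def by (auto simp: max_def intro: order_antisym)

lemma W_eq: "W x y = min x y"
proof (cases "x \<le> y")
  case True
  then show ?thesis
    unfolding W_def Let_def
    by (cases "y \<le> x"; cases "x \<le> N y") (auto simp: I_def max_def min_def intro: order_antisym dest: Nanti)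
next
  case False
  then show ?thesis
    unfolding W_def Let_def
    by (cases "y \<le> N x") (auto simp: I_def max_def min_def intro: order_antisym dest: Nanti)
qed

definition V :: "'b \<Rightarrow> 'b \<Rightarrow> 'b" where "V x y = W (I (I x y) y) (I (I y x) x)"

lemma V_eq: "V x y = max x y"
  unfolding V_def W_eq
  by (cases "x \<le> y"; cases "y \<le> x") (auto simp: I_def max_def min_def intro: order_antisym dest: Nanti)

lemma le_N_swap: "y \<le> N x \<Longrightarrow> x \<le> N y" by (metis NN Nanti)
lemma le_N_swap': "N y \<le> x \<Longrightarrow> N x \<le> y" by (metis NN Nanti)

lemma ax1: "I x y \<le> I (I y z) (I x z)"
  apply (cases "x \<le> y"; cases "y \<le> z"; cases "x \<le> z")
  apply (auto simp: I_def max_def min_def intro: order_antisym dest: Nanti)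
  by (meson Nanti NN le_N_swap le_N_swap' order.trans linear not_le)+
lemma ax2: "C x y \<le> x"
  by (auto simp: C_eq)
lemma ax3: "C x y \<le> C y x"
  by (auto simp: C_eq min_def dest: le_N_swap)
lemma ax6: "C x (I x y) \<le> min y x"
  apply (cases "x \<le> y")
  apply (auto simp: C_eq I_def max_def min_def intro: order_antisym dest: Nanti)
  done
lemma ax6': "C x (I x y) \<le> y" using ax6[of x y] by simp

lemma ax7a: "I x (I y z) \<le> I (C x y) z"
  apply (cases "x \<le> N y"; cases "y \<le> z"; cases "x \<le> z")
  apply (auto simp: C_eq I_def max_def min_def intro: order_antisym dest: Nanti)
  by (meson Nanti NN le_N_swap le_N_swap' order.trans linear not_le)+
lemma ax7b: "I (C x y) z \<le> I x (I y z)"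
  apply (cases "x \<le> N y"; cases "y \<le> z"; cases "x \<le> z")
  apply (auto simp: C_eq I_def max_def min_def intro: order_antisym dest: Nanti)
  by (meson Nanti NN le_N_swap le_N_swap' order.trans linear not_le)+
lemma ax8: "I (I x y) z \<le> I (I (I y x) z) z"
  apply (cases "x \<le> y"; cases "y \<le> x")
  apply (auto simp: I_def max_def min_def intro: order_antisym dest: Nanti)
  done
lemma axNM: "max (N (C x y)) (I (min x y) (C x y)) = N B"
  apply (cases "x \<le> N y")
  apply (auto simp: C_eq I_def max_def min_def intro: order_antisym dest: Nanti)
  done

end


lemma opt_le_refl: "opt_le x x" by (cases x) auto
lemma opt_le_trans: "opt_le x y \<Longrightarrow> opt_le y z \<Longrightarrow> opt_le x z"
  by (cases x; cases y; cases z) auto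
lemma opt_le_antisym: "opt_le x y \<Longrightarrow> opt_le y x \<Longrightarrow> x = y"
  by (cases x; cases y) auto
lemma opt_le_lin: "opt_le x y \<or> opt_le y x"
  by (cases x; cases y) auto

lemma tri_rank_inj: "tri_rank a = tri_rank b \<longleftrightarrow> a = b"
  by (cases a; cases b) auto

lemma tle_refl: "tle p p" by (simp add: tle_def opt_le_refl)
lemma tle_trans: "tle p q \<Longrightarrow> tle q r \<Longrightarrow> tle p r"
  unfolding tle_def by (auto split: if_splits intro: opt_le_trans simp: tri_rank_inj)
lemma tle_antisym: "tle p q \<Longrightarrow> tle q p \<Longrightarrow> p = q"
  unfolding tle_def by (auto split: if_splits intro: opt_le_antisym simp: prod_eq_iff)
lemma tle_lin: "tle p q \<or> tle q p"
  unfolding tle_def using opt_le_lin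
  by (cases "snd p"; cases "snd q") auto

definition legal :: "'a tval \<Rightarrow> bool" where "legal p \<longleftrightarrow> (snd p = Half \<longrightarrow> fst p = None)"

typedef 'a tv = "{p :: 'a tval. legal p}" by (rule exI[of _ "(None, Zero)"]) (simp add: legal_def)

instantiation tv :: (linorder) linorder
begin
definition less_eq_tv :: "'a tv \<Rightarrow> 'a tv \<Rightarrow> bool" where "less_eq_tv x y = tle (Rep_tv x) (Rep_tv y)"
definition less_tv :: "'a tv \<Rightarrow> 'a tv \<Rightarrow> bool" where
  "less_tv x y = (tle (Rep_tv x) (Rep_tv y) \<and> \<not> tle (Rep_tv y) (Rep_tv x))"
instance
proof
  fix x y z :: "'a tv"
  show "(x < y) = (x \<le> y \<and> \<not> y \<le> x)" by (simp add: less_eq_tv_def less_tv_def)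
  show "x \<le> x" by (simp add: less_eq_tv_def tle_refl)
  show "x \<le> y \<Longrightarrow> y \<le> z \<Longrightarrow> x \<le> z" unfolding less_eq_tv_def by (rule tle_trans)
  show "x \<le> y \<Longrightarrow> y \<le> x \<Longrightarrow> x = y" unfolding less_eq_tv_def
    by (metis Rep_tv_inject tle_antisym)
  show "x \<le> y \<or> y \<le> x" unfolding less_eq_tv_def by (rule tle_lin)
qed
end

lemma tri_neg_neg[simp]: "tri_neg (tri_neg m) = m" by (cases m) auto
lemma tneg_tneg[simp]: "tneg (tneg p) = p" by (simp add: tneg_def)
lemma legal_tneg: "legal p \<Longrightarrow> legal (tneg p)"
  unfolding legal_def tneg_def by (cases "snd p") auto

lemma tneg_anti: "legal p \<Longrightarrow> legal q \<Longrightarrow> tle p q \<Longrightarrow> tle (tneg q) (tneg p)"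
  unfolding tle_def tneg_def legal_def
  by (cases "snd p"; cases "snd q") auto

lemma tle_bot: "tle (None, Zero) p"
  unfolding tle_def by (cases "snd p") auto

definition NN :: "'a::linorder tv \<Rightarrow> 'a tv" where "NN x = Abs_tv (tneg (Rep_tv x))"

lemma Rep_NN: "Rep_tv (NN x) = tneg (Rep_tv x)"
proof -
  have "legal (Rep_tv x)" using Rep_tv by simp
  then show ?thesis unfolding NN_def by (simp add: Abs_tv_inverse legal_tneg)
qed

definition BB :: "'a::linorder tv" where "BB = Abs_tv (None, Zero)"
lemma Rep_BB: "Rep_tv BB = (None, Zero)" unfolding BB_def by (simp add: Abs_tv_inverse legal_def)

interpretation T: nmc NN BB
proof
  fix x y :: "'a tv"
  show "NN (NN x) = x" by (simp add: Rep_tv_inject[symmetric] Rep_NN)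
  have "legal (Rep_tv x)" "legal (Rep_tv y)" using Rep_tv by auto
  then show "x \<le> y \<Longrightarrow> NN y \<le> NN x" by (simp add: less_eq_tv_def Rep_NN tneg_anti)
  show "BB \<le> x" by (simp add: less_eq_tv_def tle_bot Rep_BB)
qed

lemma dval_const: "(\<forall>t. f t = c) \<Longrightarrow> dval f = (None, c)"
  unfolding dval_def by auto

lemma dval_step:
  assumes i: "i \<in> {Zero, One}" and t: "\<exists>t'. t' < t" and up: "\<forall>t'. t \<le> t' \<longrightarrow> f t' = i"
    and lo: "\<forall>t''. t'' < t \<longrightarrow> f t'' = Half"
  shows "dval f = (Some t, i)"
proof -
  have nc: "\<not> (\<exists>c. \<forall>t. f t = c)"
  proof
    assume "\<exists>c. \<forall>t. f t = c"
    then obtain c where c: "\<forall>t. f t = c" by blast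
    obtain t' where "t' < t" using t by blast
    then have "f t' = Half" using lo by blast
    moreover have "f t = i" using up by blast
    ultimately show False using c i by auto
  qed
  have "(THE p. \<exists>i t. p = (Some t, i) \<and> i \<in> {Zero, One} \<and> (\<exists>t'. t' < t) \<and>
               (\<forall>t'. t \<le> t' \<longrightarrow> f t' = i) \<and> (\<forall>t''. t'' < t \<longrightarrow> f t'' = Half)) = (Some t, i)"
  proof (rule the_equality)
    show "\<exists>i' t'. (Some t, i) = (Some t', i') \<and> i' \<in> {Zero, One} \<and> (\<exists>t''. t'' < t') \<and>
               (\<forall>t''. t' \<le> t'' \<longrightarrow> f t'' = i') \<and> (\<forall>t''. t'' < t' \<longrightarrow> f t'' = Half)"
      using assms by blast
  next
    fix p assume "\<exists>i' t'. p = (Some t', i') \<and> i' \<in> {Zero, One} \<and> (\<exists>t''. t'' < t') \<and>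
               (\<forall>t''. t' \<le> t'' \<longrightarrow> f t'' = i') \<and> (\<forall>t''. t'' < t' \<longrightarrow> f t'' = Half)"
    then obtain i' s where p: "p = (Some s, i')" "i' \<in> {Zero, One}"
      "\<forall>t''. s \<le> t'' \<longrightarrow> f t'' = i'" "\<forall>t''. t'' < s \<longrightarrow> f t'' = Half" by blast
    have "s = t"
    proof (rule ccontr)
      assume "s \<noteq> t"
      then have "s < t \<or> t < s" by auto
      then show False
      proof
        assume "s < t" then have "f s = Half" using lo by blast
        moreover have "f s = i'" using p by blast
        ultimately show False using p(2) by auto
      next
        assume "t < s" then have "f t = Half" using p by blast
        moreover have "f t = i" using up by blast
        ultimately show False using i by auto
      qed
    qed
    moreover have "i' = i" using p up \<open>s = t\<close> by auto
    ultimately show "p = (Some t, i)" using p by simp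
  qed
  then show ?thesis unfolding dval_def using nc by simp
qed

lemma dval_legal: assumes "admissible f" shows "legal (dval f)"
proof (cases "\<exists>c. \<forall>t. f t = c")
  case True
  then obtain c where "\<forall>t. f t = c" by blast
  then show "legal (dval f)" by (simp add: dval_const legal_def)
next
  case False
  then obtain i t where "i \<in> {Zero, One}" "\<exists>t'. t' < t" "\<forall>t'. t \<le> t' \<longrightarrow> f t' = i" "\<forall>t''. t'' < t \<longrightarrow> f t'' = Half"
    using assms unfolding admissible_def by blast
  then have "dval f = (Some t, i)" by (rule dval_step)
  then show "legal (dval f)" using \<open>i \<in> {Zero, One}\<close> by (auto simp: legal_def)
qed

lemma sv_legal: "temporal_assignment v \<Longrightarrow> legal (sv v f)"
proof (induction f)
  case (Var x) then show ?case by (simp add: temporal_assignment_def dval_legal)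
next
  case Bot then show ?case by (simp add: legal_def)
next
  case (Imp a b) then show ?case by (auto simp: tmax_def legal_tneg) (simp add: legal_def)
qed

definition sem :: "(nat \<Rightarrow> 'a::linorder \<Rightarrow> tri) \<Rightarrow> fm \<Rightarrow> 'a tv" where
  "sem v f = Abs_tv (sv v f)"

lemma Rep_sem: "temporal_assignment v \<Longrightarrow> Rep_tv (sem v f) = sv v f"
proof -
  assume "temporal_assignment v"
  then have "legal (sv v f)" by (rule sv_legal)
  then show ?thesis unfolding sem_def by (simp add: Abs_tv_inverse)
qed

lemma NB: "Rep_tv (NN BB) = (None, One)" by (simp add: Rep_NN Rep_BB tneg_def)

context fixes v :: "nat \<Rightarrow> 'a::linorder \<Rightarrow> tri" assumes ta: "temporal_assignment v"
begin

lemma sem_Bot[simp]: "sem v Bot = BB" by (simp add: Rep_tv_inject[symmetric] Rep_sem[OF ta] Rep_BB)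

lemma sem_Imp[simp]: "sem v (Imp a b) = T.I (sem v a) (sem v b)"
  by (simp add: Rep_tv_inject[symmetric] Rep_sem[OF ta] T.I_def less_eq_tv_def NB tmax_def max_def Rep_NN Rep_BB tneg_def)

lemma sem_Neg[simp]: "sem v (Neg a) = NN (sem v a)"
  by (simp add: Neg_def)

lemma sem_Conj[simp]: "sem v (Conj a b) = T.C (sem v a) (sem v b)"
  by (simp add: Conj_def T.C_def)

lemma sem_Wedge[simp]: "sem v (Wedge a b) = min (sem v a) (sem v b)"
  by (simp add: Wedge_def T.W_eq[symmetric] T.W_def Let_def)

lemma sem_Vee[simp]: "sem v (Vee a b) = max (sem v a) (sem v b)"
  by (simp add: Vee_def T.V_eq[symmetric] T.V_def del: sem_Wedge) (simp add: Wedge_def T.W_def Let_def)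

lemma top_iff: "sv v f = (None, One) \<longleftrightarrow> sem v f = NN BB"
  by (simp add: Rep_tv_inject[symmetric] Rep_sem[OF ta] NB)

lemma ax_sound: "nm_axiom f \<Longrightarrow> sem v f = NN BB"
proof (induction rule: nm_axiom.induct)
qed (simp_all add: T.I_top T.ax1 T.ax2 T.ax3 T.ax6' T.ax7a T.ax7b T.ax8 T.axNM)

lemma soundness: "nm_deriv G f \<Longrightarrow> \<forall>g\<in>G. sv v g = (None, One) \<Longrightarrow> sv v f = (None, One)"
proof (induction rule: nm_deriv.induct)
  case (hyp \<phi> \<Gamma>) then show ?case by blast
next
  case (ax \<phi> \<Gamma>) then show ?case using ax_sound top_iff by blast
next
  case (mp \<Gamma> a b)
  then show ?case unfolding top_iff by (simp add: T.I_top)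
qed

end


lemma get_g:
  assumes "infinite (UNIV :: 'a::linorder set)"
  shows "\<exists>g :: nat \<Rightarrow> 'a. (\<forall>i j. i < j \<longrightarrow> j < n \<longrightarrow> g i < g j) \<and> (\<forall>i < n. \<exists>t'. t' < g i)"
proof -
  let ?A0 = "{t::'a. \<exists>t'. t' < t}"
  have "UNIV - ?A0 \<subseteq> {SOME t. t \<in> UNIV - ?A0}"
  proof
    fix t assume t: "t \<in> UNIV - ?A0"
    then have "(SOME t. t \<in> UNIV - ?A0) \<in> UNIV - ?A0" by (rule someI)
    with t show "t \<in> {SOME t. t \<in> UNIV - ?A0}" by (auto simp: not_less intro: order_antisym)
  qed
  then have "finite (UNIV - ?A0)" using finite_subset by blast
  then have "infinite ?A0" using assms by (metis Diff_infinite_finite double_diff subset_UNIV top.extremum_uniqueI)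
  then obtain A where A: "A \<subseteq> ?A0" "finite A" "card A = n" using infinite_arbitrarily_large by blast
  define g where "g i = sorted_list_of_set A ! i" for i
  have len: "length (sorted_list_of_set A) = n" using A by (simp add: length_sorted_list_of_set)
  have "sorted_wrt (<) (sorted_list_of_set A)" by (rule strict_sorted_list_of_set)
  then have 1: "\<forall>i j. i < j \<longrightarrow> j < n \<longrightarrow> g i < g j" unfolding g_def using len sorted_wrt_nth_less by metis
  have 2: "\<forall>i < n. \<exists>t'. t' < g i"
  proof (intro allI impI)
    fix i assume "i < n"
    then have "g i \<in> A" unfolding g_def using len A(2) nth_mem set_sorted_list_of_set by metis
    then show "\<exists>t'. t' < g i" using A(1) by blast
  qed
  show ?thesis using 1 2 by blast
qed

fun sub :: "fm \<Rightarrow> fm set" where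
  "sub (Var x) = {Var x}"
| "sub Bot = {Bot}"
| "sub (Imp a b) = insert (Imp a b) (sub a \<union> sub b)"

lemma finite_sub: "finite (sub f)" by (induction f) auto
lemma sub_self: "f \<in> sub f" by (cases f) auto
lemma sub_Imp: "Imp a b \<in> sub f \<Longrightarrow> a \<in> sub f \<and> b \<in> sub f"
  by (induction f) (auto simp: sub_self)

definition realize :: "'a tval \<Rightarrow> ('a::linorder \<Rightarrow> tri)" where
  "realize p = (case p of (None, c) \<Rightarrow> (\<lambda>_. c) | (Some t, i) \<Rightarrow> (\<lambda>s. if t \<le> s then i else Half))"

lemma realize_ok:
  assumes "\<And>t i. p = (Some t, i) \<Longrightarrow> i \<noteq> Half \<and> (\<exists>t'. t' < t)"
  shows "admissible (realize p) \<and> dval (realize p) = p"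
proof (cases p)
  case (Pair a i)
  show ?thesis
  proof (cases a)
    case None
    then show ?thesis using Pair by (auto simp: realize_def admissible_def dval_const)
  next
    case (Some t)
    with Pair assms have i: "i \<in> {Zero, One}" and t: "\<exists>t'. t' < t" by (cases i; auto)+
    have r: "realize p = (\<lambda>s. if t \<le> s then i else Half)" using Pair Some by (simp add: realize_def)
    have "dval (realize p) = (Some t, i)" unfolding r by (rule dval_step) (use i t in auto)
    moreover have "admissible (realize p)" unfolding r admissible_def
      apply (rule disjI2) apply (rule exI[of _ i], rule exI[of _ t]) using i t by auto
    ultimately show ?thesis using Pair Some by simp
  qed
qed


fun tkd :: "'a tval \<Rightarrow> nat" where
  "tkd (None, Zero) = 0" | "tkd (Some t, Zero) = 1" | "tkd (x, Half) = 2" | "tkd (Some t, One) = 3"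
| "tkd (None, One) = 4"

lemma tkd_lt: "tkd p < tkd q \<Longrightarrow> tle p q \<and> \<not> tle q p"
  by (cases p rule: tkd.cases; cases q rule: tkd.cases) (auto simp: tle_def)

locale emb = lin D for D +
  fixes S :: "fm set" and g :: "nat \<Rightarrow> 'a::linorder" and NS :: nat
  assumes finS: "finite S"
  and S_neg: "\<forall>a\<in>S. \<exists>c\<in>S. le (Neg a) c \<and> le c (Neg a)"
  and BotS: "Bot \<in> S"
  and g_mono: "i < j \<Longrightarrow> j < NS \<Longrightarrow> g i < g j"
  and g_nonmin: "i < NS \<Longrightarrow> \<exists>t'. t' < g i"
  and NS_big: "card S < NS"
begin

definition eqv where "eqv a b \<longleftrightarrow> le a b \<and> le b a"
definition cls where "cls a = {b\<in>S. eqv a b}"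
definition rank where "rank a = card {cls b | b. b \<in> S \<and> le b a \<and> \<not> le a b}"
definition Dom where "Dom = {a. \<exists>c\<in>S. eqv a c}"

lemma rank_set_sub: "{cls b | b. b \<in> S \<and> le b a \<and> \<not> le a b} \<subseteq> cls ` S" by blast
lemma rank_set_fin: "finite {cls b | b. b \<in> S \<and> le b a \<and> \<not> le a b}"
  using rank_set_sub finS finite_subset by blast

lemma rank_bound: "rank a < NS"
proof -
  have "rank a \<le> card (cls ` S)" unfolding rank_def using rank_set_sub finS by (intro card_mono) auto
  also have "\<dots> \<le> card S" using finS card_image_le by blast
  finally show ?thesis using NS_big by simp
qed

lemma rank_set_mono: "le a b \<Longrightarrow> {cls d | d. d \<in> S \<and> le d a \<and> \<not> le a d} \<subseteq> {cls d | d. d \<in> S \<and> le d b \<and> \<not> le b d}"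
proof (rule subsetI)
  fix x assume ab: "le a b" and "x \<in> {cls d | d. d \<in> S \<and> le d a \<and> \<not> le a d}"
  then obtain d where d: "x = cls d" "d \<in> S" "le d a" "\<not> le a d" by blast
  have "le d b" using le_trans[OF d(3) ab] .
  moreover have "\<not> le b d" using le_trans[OF ab] d(4) by blast
  ultimately show "x \<in> {cls d | d. d \<in> S \<and> le d b \<and> \<not> le b d}" using d by blast
qed

lemma rank_mono: "le a b \<Longrightarrow> rank a \<le> rank b"
  unfolding rank_def by (rule card_mono[OF rank_set_fin rank_set_mono])

lemma rank_strict: assumes "a \<in> Dom" "le a b" "\<not> le b a" shows "rank a < rank b"
proof -
  obtain c where c: "c \<in> S" "eqv a c" using assms(1) unfolding Dom_def by blast
  have ca: "le c a" "le a c" using c(2) unfolding eqv_def by auto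
  let ?A = "{cls d | d. d \<in> S \<and> le d a \<and> \<not> le a d}"
  let ?B = "{cls d | d. d \<in> S \<and> le d b \<and> \<not> le b d}"
  have sub: "?A \<subseteq> ?B" using rank_set_mono[OF assms(2)] .
  have cb: "le c b" using le_trans[OF ca(1) assms(2)] .
  have nbc: "\<not> le b c"
  proof
    assume "le b c" then have "le b a" using ca(1) by (rule le_trans)
    with assms(3) show False by blast
  qed
  have inB: "cls c \<in> ?B" by (rule CollectI, rule exI[of _ c]) (simp add: c(1) cb nbc)
  have ninA: "cls c \<notin> ?A"
  proof
    assume "cls c \<in> ?A"
    then obtain d where d: "d \<in> S" "le d a" "\<not> le a d" "cls c = cls d" by auto
    have "c \<in> cls c" using c(1) unfolding cls_def eqv_def by simp
    then have "c \<in> cls d" using d(4) by simp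
    then have "le c d" unfolding cls_def eqv_def by simp
    then have "le a d" by (rule le_trans[OF ca(2)])
    then show False using d(3) by simp
  qed
  have "?A \<noteq> ?B"
  proof
    assume eq: "?A = ?B"
    have "cls c \<in> ?A" unfolding eq by (rule inB)
    then show False using ninA by contradiction
  qed
  then have "?A \<subset> ?B" using sub by (rule psubsetI[rotated])
  then show ?thesis unfolding rank_def by (rule psubset_card_mono[OF rank_set_fin])
qed

lemma rank_le_iff: "a \<in> Dom \<Longrightarrow> b \<in> Dom \<Longrightarrow> rank a \<le> rank b \<longleftrightarrow> le a b"
proof
  assume a: "a \<in> Dom" "b \<in> Dom" "rank a \<le> rank b"
  show "le a b"
  proof (rule ccontr)
    assume "\<not> le a b"
    then have "le b a" using le_lin by blast
    then have "rank b < rank a" using rank_strict a(2) \<open>\<not> le a b\<close> by blast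
    then show False using a(3) by simp
  qed
next
  assume "a \<in> Dom" "b \<in> Dom" "le a b"
  then show "rank a \<le> rank b" by (simp add: rank_mono)
qed

lemma rank_eqv: "eqv a b \<Longrightarrow> rank a = rank b"
  using rank_mono by (simp add: eqv_def le_antisym)

lemma g_le_iff: "i < NS \<Longrightarrow> j < NS \<Longrightarrow> g i \<le> g j \<longleftrightarrow> i \<le> j"
  using g_mono by (metis le_less linorder_not_le order_less_asym)

lemma eqv_Neg: "eqv a b \<Longrightarrow> eqv (Neg a) (Neg b)"
  unfolding eqv_def using neg_anti by blast

lemma Dom_eqv: assumes "a \<in> Dom" "eqv a b" shows "b \<in> Dom"
proof -
  obtain c where c: "c \<in> S" "le a c" "le c a" using assms(1) unfolding Dom_def eqv_def by blast
  have "le b c" using le_trans[of b a c] assms(2) c unfolding eqv_def by blast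
  moreover have "le c b" using le_trans[of c a b] assms(2) c unfolding eqv_def by blast
  ultimately show ?thesis using c(1) unfolding Dom_def eqv_def by blast
qed

lemma Dom_Neg: "a \<in> Dom \<Longrightarrow> Neg a \<in> Dom"
proof -
  assume "a \<in> Dom"
  then obtain c where c: "c \<in> S" "eqv a c" by (auto simp: Dom_def)
  then obtain d where d: "d \<in> S" "le (Neg c) d" "le d (Neg c)" using S_neg by blast
  have "eqv (Neg a) (Neg c)" using c eqv_Neg by blast
  then have "eqv (Neg a) d" using d le_trans[of "Neg a" "Neg c" d] le_trans[of d "Neg c" "Neg a"] unfolding eqv_def by blast
  then show ?thesis using d unfolding Dom_def by blast
qed

lemma S_Dom: "a \<in> S \<Longrightarrow> a \<in> Dom" unfolding Dom_def eqv_def using le_refl by blast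

definition h :: "fm \<Rightarrow> 'a tval" where
  "h a = (if le a Bot then (None, Zero) else if le Top a then (None, One)
          else if \<not> le (Neg a) a then (Some (g (rank a)), Zero)
          else if le a (Neg a) then (None, Half)
          else (Some (g (rank (Neg a))), One))"

definition kd :: "fm \<Rightarrow> nat" where
  "kd a = (if le a Bot then 0 else if le Top a then 4
          else if \<not> le (Neg a) a then 1
          else if le a (Neg a) then 2 else 3)"

declare le_trans[trans]

lemma NTop_le_Bot: "le (Neg Top) Bot"
  using nn1[of Bot] negTop by simp

lemma notB_Neg: "\<not> le a Bot \<Longrightarrow> \<not> le Top (Neg a)"
proof
  assume "\<not> le a Bot" and t: "le Top (Neg a)"
  from t have "le (Neg (Neg a)) (Neg Top)" by (rule neg_anti)
  then have "le a (Neg Top)" by (rule le_trans[OF nn2[of a]])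
  then have "le a Bot" using NTop_le_Bot by (rule le_trans)
  with \<open>\<not> le a Bot\<close> show False by blast
qed

lemma notT_Neg: "\<not> le Top a \<Longrightarrow> \<not> le (Neg a) Bot"
proof
  assume "\<not> le Top a" and t: "le (Neg a) Bot"
  from t have "le (Neg Bot) (Neg (Neg a))" by (rule neg_anti)
  then have "le Top (Neg (Neg a))" by (simp add: negTop)
  also have "le (Neg (Neg a)) a" by (rule nn1)
  finally show False using \<open>\<not> le Top a\<close> by blast
qed

lemma kd_cases:
  "kd a = 0 \<and> le a Bot \<or>
   kd a = 4 \<and> \<not> le a Bot \<and> le Top a \<or>
   kd a = 1 \<and> \<not> le a Bot \<and> \<not> le Top a \<and> \<not> le (Neg a) a \<or>
   kd a = 2 \<and> \<not> le a Bot \<and> \<not> le Top a \<and> le (Neg a) a \<and> le a (Neg a) \<or>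
   kd a = 3 \<and> \<not> le a Bot \<and> \<not> le Top a \<and> le (Neg a) a \<and> \<not> le a (Neg a)"
  unfolding kd_def by auto

lemma kd_lt_nle: assumes "kd a < kd b" shows "\<not> le b a"
proof
  assume ba: "le b a"
  have na: "le (Neg a) (Neg b)" using ba by (rule neg_anti)
  consider "kd a = 0 \<and> le a Bot" | "kd a = 4 \<and> \<not> le a Bot \<and> le Top a" |
   "kd a = 1 \<and> \<not> le a Bot \<and> \<not> le Top a \<and> \<not> le (Neg a) a" |
   "kd a = 2 \<and> \<not> le a Bot \<and> \<not> le Top a \<and> le (Neg a) a \<and> le a (Neg a)" |
   "kd a = 3 \<and> \<not> le a Bot \<and> \<not> le Top a \<and> le (Neg a) a \<and> \<not> le a (Neg a)"
    using kd_cases[of a] by blast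
  note ca = this
  consider "kd b = 0 \<and> le b Bot" | "kd b = 4 \<and> \<not> le b Bot \<and> le Top b" |
   "kd b = 1 \<and> \<not> le b Bot \<and> \<not> le Top b \<and> \<not> le (Neg b) b" |
   "kd b = 2 \<and> \<not> le b Bot \<and> \<not> le Top b \<and> le (Neg b) b \<and> le b (Neg b)" |
   "kd b = 3 \<and> \<not> le b Bot \<and> \<not> le Top b \<and> le (Neg b) b \<and> \<not> le b (Neg b)"
    using kd_cases[of b] by blast
  note cb = this
  show False
  proof (cases rule: ca)
    case 1
    then have "le b Bot" using le_trans[OF ba] by blast
    then have "kd b = 0" by (simp add: kd_def)
    with 1 assms show False by simp
  next
    case 2 with assms show False using cb by (cases rule: cb) auto
  next
    case 3
    note A = this
    show False
    proof (cases rule: cb)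
      case 1 with A assms show False by simp
    next
      case 2 then have "le Top a" using le_trans[OF _ ba] by blast
      with A show False by simp
    next
      case 3 with A assms show False by simp
    next
      case 4
      have "le (Neg a) b" using le_trans[OF na] 4 by blast
      then have "le (Neg a) a" using ba by (rule le_trans)
      with A show False by simp
    next
      case 5
      have "le (Neg a) b" using le_trans[OF na] 5 by blast
      then have "le (Neg a) a" using ba by (rule le_trans)
      with A show False by simp
    qed
  next
    case 4
    note A = this
    show False
    proof (cases rule: cb)
      case 1 with A assms show False by simp
    next
      case 2 then have "le Top a" using le_trans[OF _ ba] by blast
      with A show False by simp
    next
      case 3 with A assms show False by simp
    next
      case 4 with A assms show False by simp
    next
      case 5
      have "le b a" by (rule ba)
      also have "le a (Neg a)" using A by simp
      also have "le (Neg a) (Neg b)" by (rule na)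
      finally show False using 5 by simp
    qed
  next
    case 5
    note A = this
    show False
    proof (cases rule: cb)
      case 2 then have "le Top a" using le_trans[OF _ ba] by blast
      with A show False by simp
    qed (use A assms in simp_all)
  qed
qed

lemma kd_lt: "kd a < kd b \<Longrightarrow> le a b \<and> \<not> le b a"
  using kd_lt_nle le_lin by blast

lemma h_kd: "(kd a = 0 \<longrightarrow> h a = (None, Zero)) \<and> (kd a = 4 \<longrightarrow> h a = (None, One)) \<and>
  (kd a = 1 \<longrightarrow> h a = (Some (g (rank a)), Zero)) \<and> (kd a = 2 \<longrightarrow> h a = (None, Half)) \<and>
  (kd a = 3 \<longrightarrow> h a = (Some (g (rank (Neg a))), One))"
  unfolding kd_def h_def by auto

lemma kd_range: "kd a \<le> 4" unfolding kd_def by auto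

lemma tkd_h: "tkd (h a) = kd a"
  unfolding kd_def h_def by auto

lemma h_kd_lt: assumes "kd a < kd b" shows "tle (h a) (h b) \<and> \<not> tle (h b) (h a)"
  using tkd_lt[of "h a" "h b"] assms by (simp add: tkd_h)

lemma nn_eqv: "eqv (Neg (Neg a)) a" unfolding eqv_def using nn1 nn2 by blast

lemma kd_Neg: "kd (Neg a) = 4 - kd a"
proof -
  have nnl: "le (Neg (Neg a)) a" and nnr: "le a (Neg (Neg a))" by (rule nn1, rule nn2)
  consider "kd a = 0 \<and> le a Bot" | "kd a = 4 \<and> \<not> le a Bot \<and> le Top a" |
   "kd a = 1 \<and> \<not> le a Bot \<and> \<not> le Top a \<and> \<not> le (Neg a) a" |
   "kd a = 2 \<and> \<not> le a Bot \<and> \<not> le Top a \<and> le (Neg a) a \<and> le a (Neg a)" |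
   "kd a = 3 \<and> \<not> le a Bot \<and> \<not> le Top a \<and> le (Neg a) a \<and> \<not> le a (Neg a)"
    using kd_cases[of a] by blast
  then show ?thesis
  proof cases
    case 1
    then have t: "le Top (Neg a)" using neg_anti[of a Bot] negTop by simp
    have "\<not> le (Neg a) Bot"
    proof
      assume "le (Neg a) Bot" then have "le Top Bot" by (rule le_trans[OF t])
      then show False using not_Top_Bot by blast
    qed
    then show ?thesis using 1 t by (simp add: kd_def)
  next
    case 2
    then have "le (Neg a) (Neg Top)" using neg_anti by blast
    then have "le (Neg a) Bot" using NTop_le_Bot by (rule le_trans)
    then show ?thesis using 2 by (simp add: kd_def)
  next
    case 3
    have b: "\<not> le (Neg a) Bot" using 3 notT_Neg by blast
    have t: "\<not> le Top (Neg a)" using 3 notB_Neg by blast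
    have an: "le a (Neg a)" using 3 le_lin by blast
    have x: "le (Neg (Neg a)) (Neg a)" using nnl an by (rule le_trans)
    have y: "\<not> le (Neg a) (Neg (Neg a))"
    proof
      assume "le (Neg a) (Neg (Neg a))" then have "le (Neg a) a" using nnl by (rule le_trans)
      with 3 show False by blast
    qed
    show ?thesis using 3 b t x y by (simp add: kd_def)
  next
    case 4
    have b: "\<not> le (Neg a) Bot" using 4 notT_Neg by blast
    have t: "\<not> le Top (Neg a)" using 4 notB_Neg by blast
    have x: "le (Neg (Neg a)) (Neg a)" using 4 by (intro le_trans[OF nnl]) simp
    have y: "le (Neg a) (Neg (Neg a))" using 4 by (intro le_trans[OF _ nnr]) simp
    show ?thesis using 4 b t x y by (simp add: kd_def)
  next
    case 5
    have b: "\<not> le (Neg a) Bot" using 5 notT_Neg by blast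
    have t: "\<not> le Top (Neg a)" using 5 notB_Neg by blast
    have y: "\<not> le (Neg (Neg a)) (Neg a)"
    proof
      assume "le (Neg (Neg a)) (Neg a)" then have "le a (Neg a)" by (rule le_trans[OF nnr])
      with 5 show False by blast
    qed
    show ?thesis using 5 b t y by (simp add: kd_def)
  qed
qed

lemma eqv_le_l: "eqv a b \<Longrightarrow> le a c \<longleftrightarrow> le b c"
  unfolding eqv_def using le_trans[of a b c] le_trans[of b a c] by blast
lemma eqv_le_r: "eqv a b \<Longrightarrow> le c a \<longleftrightarrow> le c b"
  unfolding eqv_def using le_trans[of c a b] le_trans[of c b a] by blast

lemma h_eqv: assumes "eqv a b" shows "h a = h b"
proof -
  have n: "eqv (Neg a) (Neg b)" using assms by (rule eqv_Neg)
  have 1: "le a Bot = le b Bot" using assms by (rule eqv_le_l)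
  have 2: "le Top a = le Top b" using assms by (rule eqv_le_r)
  have 3: "le (Neg a) a = le (Neg b) b" using eqv_le_l[OF n] eqv_le_r[OF assms] by simp
  have 4: "le a (Neg a) = le b (Neg b)" using eqv_le_l[OF assms] eqv_le_r[OF n] by simp
  have 5: "rank a = rank b" using assms by (rule rank_eqv)
  have 6: "rank (Neg a) = rank (Neg b)" using n by (rule rank_eqv)
  show ?thesis unfolding h_def using 1 2 3 4 5 6 by simp
qed

lemma h_le: assumes "a \<in> Dom" "b \<in> Dom" shows "tle (h a) (h b) \<longleftrightarrow> le a b"
proof -
  consider "kd a < kd b" | "kd b < kd a" | "kd a = kd b" by linarith
  then show ?thesis
  proof cases
    case 1 then show ?thesis using h_kd_lt kd_lt by blast
  next
    case 2 then show ?thesis using h_kd_lt kd_lt tle_lin by blast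
  next
    case 3
    have r: "kd a \<le> 4" by (rule kd_range)
    have "kd a = 0 \<or> kd a = 1 \<or> kd a = 2 \<or> kd a = 3 \<or> kd a = 4" using r by linarith
    then show ?thesis
    proof (elim disjE)
      assume k: "kd a = 0"
      then have "le a Bot" unfolding kd_def by (simp split: if_splits)
      then have "le a b" using le_Bot by (rule le_trans)
      moreover have "tle (h a) (h b)" using h_kd[of a] h_kd[of b] k 3 by (simp add: tle_def)
      ultimately show ?thesis by blast
    next
      assume k: "kd a = 4"
      then have "kd b = 4" using 3 by simp
      then have "le Top b" unfolding kd_def by (simp split: if_splits)
      then have "le a b" by (rule le_trans[OF le_Top])
      moreover have "tle (h a) (h b)" using h_kd[of a] h_kd[of b] k 3 by (simp add: tle_def)
      ultimately show ?thesis by blast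
    next
      assume k: "kd a = 1"
      have "tle (h a) (h b) \<longleftrightarrow> g (rank a) \<le> g (rank b)"
        using h_kd[of a] h_kd[of b] k 3 by (simp add: tle_def)
      also have "\<dots> \<longleftrightarrow> rank a \<le> rank b" by (rule g_le_iff[OF rank_bound rank_bound])
      also have "\<dots> \<longleftrightarrow> le a b" using assms by (rule rank_le_iff)
      finally show ?thesis .
    next
      assume k: "kd a = 2"
      then have ma: "le a (Neg a)" unfolding kd_def by (simp split: if_splits)
      have "kd b = 2" using k 3 by simp
      then have mb: "le (Neg b) b" unfolding kd_def by (simp split: if_splits)
      have "le a b"
      proof (rule ccontr)
        assume "\<not> le a b"
        then have "le b a" using le_lin by blast
        then have "le (Neg a) (Neg b)" by (rule neg_anti)
        then have "le a (Neg b)" by (rule le_trans[OF ma])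
        then have "le a b" using mb by (rule le_trans)
        with \<open>\<not> le a b\<close> show False by blast
      qed
      moreover have "tle (h a) (h b)" using h_kd[of a] h_kd[of b] k 3 by (simp add: tle_def)
      ultimately show ?thesis by blast
    next
      assume k: "kd a = 3"
      have "tle (h a) (h b) \<longleftrightarrow> g (rank (Neg b)) \<le> g (rank (Neg a))"
        using h_kd[of a] h_kd[of b] k 3 by (simp add: tle_def)
      also have "\<dots> \<longleftrightarrow> rank (Neg b) \<le> rank (Neg a)" by (rule g_le_iff[OF rank_bound rank_bound])
      also have "\<dots> \<longleftrightarrow> le (Neg b) (Neg a)" using Dom_Neg assms by (intro rank_le_iff) auto
      also have "\<dots> \<longleftrightarrow> le a b"
      proof
        assume "le (Neg b) (Neg a)"
        then have "le (Neg (Neg a)) (Neg (Neg b))" by (rule neg_anti)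
        then have "le a (Neg (Neg b))" by (rule le_trans[OF nn2[of a]])
        then show "le a b" using nn1[of b] by (rule le_trans)
      qed (rule neg_anti)
      finally show ?thesis .
    qed
  qed
qed

lemma h_Neg: "h (Neg a) = tneg (h a)"
proof -
  have rr: "rank (Neg (Neg a)) = rank a" using nn_eqv by (rule rank_eqv)
  have kn: "kd (Neg a) = 4 - kd a" by (rule kd_Neg)
  have r: "kd a \<le> 4" by (rule kd_range)
  have "kd a = 0 \<or> kd a = 1 \<or> kd a = 2 \<or> kd a = 3 \<or> kd a = 4" using r by linarith
  then show ?thesis
  proof (elim disjE)
    assume k: "kd a = 0"
    then have "h a = (None, Zero)" using h_kd by blast
    moreover have "h (Neg a) = (None, One)" using k kn h_kd[of "Neg a"] by simp
    ultimately show ?thesis by (simp add: tneg_def)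
  next
    assume k: "kd a = 1"
    then have "h a = (Some (g (rank a)), Zero)" using h_kd by blast
    moreover have "h (Neg a) = (Some (g (rank (Neg (Neg a)))), One)" using k kn h_kd[of "Neg a"] by simp
    ultimately show ?thesis using rr by (simp add: tneg_def)
  next
    assume k: "kd a = 2"
    then have "h a = (None, Half)" using h_kd by blast
    moreover have "h (Neg a) = (None, Half)" using k kn h_kd[of "Neg a"] by simp
    ultimately show ?thesis by (simp add: tneg_def)
  next
    assume k: "kd a = 3"
    then have "h a = (Some (g (rank (Neg a))), One)" using h_kd by blast
    moreover have "h (Neg a) = (Some (g (rank (Neg a))), Zero)" using k kn h_kd[of "Neg a"] by simp
    ultimately show ?thesis by (simp add: tneg_def)
  next
    assume k: "kd a = 4"
    then have "h a = (None, One)" using h_kd by blast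
    moreover have "h (Neg a) = (None, Zero)" using k kn h_kd[of "Neg a"] by simp
    ultimately show ?thesis by (simp add: tneg_def)
  qed
qed

lemma h_ok: assumes "h a = (Some t, i)" shows "i \<noteq> Half \<and> (\<exists>t'. t' < t)"
proof -
  have r: "kd a \<le> 4" by (rule kd_range)
  have "kd a = 0 \<or> kd a = 1 \<or> kd a = 2 \<or> kd a = 3 \<or> kd a = 4" using r by linarith
  then show ?thesis
  proof (elim disjE)
    assume "kd a = 1"
    then have "h a = (Some (g (rank a)), Zero)" using h_kd by blast
    then show ?thesis using assms g_nonmin[OF rank_bound] by simp
  next
    assume "kd a = 3"
    then have "h a = (Some (g (rank (Neg a))), One)" using h_kd by blast
    then show ?thesis using assms g_nonmin[OF rank_bound] by simp
  qed (use assms h_kd[of a] in simp_all)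
qed


definition vv :: "nat \<Rightarrow> 'a \<Rightarrow> tri" where "vv x = realize (h (Var x))"

lemma vv_ta: "temporal_assignment vv"
  unfolding temporal_assignment_def vv_def using realize_ok h_ok by blast

lemma h_top: "nm_deriv D f \<Longrightarrow> h f = (None, One)"
proof -
  assume "nm_deriv D f"
  then have t: "le Top f" using prov_iff by blast
  have "\<not> le f Bot"
  proof
    assume "le f Bot" then have "le Top Bot" by (rule le_trans[OF t])
    then show False using not_Top_Bot by blast
  qed
  then show ?thesis using t unfolding h_def by simp
qed

lemma h_top_iff: "h f = (None, One) \<longleftrightarrow> nm_deriv D f"
proof
  assume "h f = (None, One)"
  then have "kd f = 4" using tkd_h[of f] by simp
  then have "le Top f" unfolding kd_def by (simp split: if_splits)
  then show "nm_deriv D f" using prov_iff by blast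
qed (rule h_top)

lemma sv_h:
  assumes P: "\<And>a b. Imp a b \<in> P \<Longrightarrow> a \<in> P \<and> b \<in> P" and PS: "P \<subseteq> S" and PN: "\<And>a. a \<in> P \<Longrightarrow> Neg a \<in> S"
  shows "f \<in> P \<Longrightarrow> sv vv f = h f"
proof (induction f)
  case (Var x)
  have "dval (realize (h (Var x))) = h (Var x)" using realize_ok[of "h (Var x)"] h_ok by blast
  then show ?case by (simp add: vv_def)
next
  case Bot
  then show ?case unfolding h_def by simp
next
  case (Imp a b)
  then have ab: "a \<in> P" "b \<in> P" using P by blast+
  then have ih: "sv vv a = h a" "sv vv b = h b" using Imp.IH by blast+
  have aD: "a \<in> Dom" and bD: "b \<in> Dom" and naD: "Neg a \<in> Dom" using ab PS PN S_Dom by blast+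
  show ?case
  proof (cases "le a b")
    case True
    then have "tle (h a) (h b)" using h_le aD bD by blast
    moreover have "h (Imp a b) = (None, One)" using True h_top unfolding le_def by blast
    ultimately show ?thesis using ih by simp
  next
    case False
    then have nt: "\<not> tle (h a) (h b)" using h_le aD bD by blast
    have "sv vv (Imp a b) = tmax (h (Neg a)) (h b)" using ih nt h_Neg by simp
    also have "\<dots> = (if le (Neg a) b then h b else h (Neg a))"
      unfolding tmax_def using h_le naD bD by simp
    also have "\<dots> = h (Imp a b)"
    proof (cases "le (Neg a) b")
      case True
      have "le (Imp a b) b" using imp_max[OF False] le_trans[OF _ True] by blast
      then have "eqv (Imp a b) b" using le_imp unfolding eqv_def by blast
      then show ?thesis using True h_eqv by simp
    next
      case nb: False
      then have bn: "le b (Neg a)" using le_lin by blast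
      have "le (Imp a b) (Neg a)" using imp_max[OF False] le_trans[OF _ bn] by blast
      then have "eqv (Imp a b) (Neg a)" using le_neg_imp unfolding eqv_def by blast
      then show ?thesis using nb h_eqv by simp
    qed
    finally show ?thesis .
  qed
qed

end


theorem mainTheorem7:
  fixes \<Gamma> :: "fm set" and \<phi> :: fm
  assumes "infinite (UNIV :: 'a::linorder set)"
    and "finite \<Gamma>"
  shows "nm_deriv \<Gamma> \<phi> \<longleftrightarrow> temporal_models TYPE('a) \<Gamma> \<phi>"
proof
  assume "nm_deriv \<Gamma> \<phi>"
  then show "temporal_models TYPE('a) \<Gamma> \<phi>"
    unfolding temporal_models_def using soundness by blast
next
  assume tm: "temporal_models TYPE('a) \<Gamma> \<phi>"
  show "nm_deriv \<Gamma> \<phi>"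
  proof (rule ccontr)
    assume nd: "\<not> nm_deriv \<Gamma> \<phi>"
    then obtain D where D: "\<Gamma> \<subseteq> D" "\<not> nm_deriv D \<phi>" "\<forall>D'. D \<subseteq> D' \<and> \<not> nm_deriv D' \<phi> \<longrightarrow> D' = D"
      using maximal by blast
    have linD: "lin D"
    proof
      fix a b show "nm_deriv D (Imp a b) \<or> nm_deriv D (Imp b a)" using maximal_linear D(2,3) by blast
    next
      show "\<not> nm_deriv D Bot"
      proof
        assume "nm_deriv D Bot"
        moreover have "nm_deriv D (Imp Bot \<phi>)" by (rule axI, rule nm_axiom.A9)
        ultimately have "nm_deriv D \<phi>" using mpI by blast
        with D(2) show False by blast
      qed
    qed
    define P where "P = insert Bot (sub \<phi> \<union> \<Union>(sub ` \<Gamma>))"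
    define S where "S = P \<union> Neg ` P"
    have finP: "finite P" unfolding P_def using assms(2) finite_sub by auto
    then have finS: "finite S" unfolding S_def by simp
    obtain g :: "nat \<Rightarrow> 'a" where g: "\<forall>i j. i < j \<longrightarrow> j < card S + 1 \<longrightarrow> g i < g j" "\<forall>i < card S + 1. \<exists>t'. t' < g i"
      using get_g[OF assms(1)] by blast
    interpret E: emb D S g "card S + 1"
    proof (rule emb.intro[OF linD], unfold_locales)
      show "finite S" by (rule finS)
      show "Bot \<in> S" unfolding S_def P_def by simp
      show "\<And>i j. i < j \<Longrightarrow> j < card S + 1 \<Longrightarrow> g i < g j" using g(1) by blast
      show "\<And>i. i < card S + 1 \<Longrightarrow> \<exists>t'. t' < g i" using g(2) by blast
      show "card S < card S + 1" by simp
      show "\<forall>a\<in>S. \<exists>c\<in>S. lin.le D (Neg a) c \<and> lin.le D c (Neg a)"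
      proof
        fix a assume "a \<in> S"
        then have "a \<in> P \<or> a \<in> Neg ` P" unfolding S_def by blast
        then show "\<exists>c\<in>S. lin.le D (Neg a) c \<and> lin.le D c (Neg a)"
        proof
          assume "a \<in> P"
          then have "Neg a \<in> S" unfolding S_def by blast
          then show ?thesis using lin.le_refl[OF linD] by blast
        next
          assume "a \<in> Neg ` P"
          then obtain c where c: "c \<in> P" "a = Neg c" by blast
          then have "c \<in> S" unfolding S_def by blast
          moreover have "lin.le D (Neg a) c" "lin.le D c (Neg a)"
            using c lin.nn1[OF linD] lin.nn2[OF linD] by auto
          ultimately show ?thesis by blast
        qed
      qed
    qed
    have Pcl: "\<And>a b. Imp a b \<in> P \<Longrightarrow> a \<in> P \<and> b \<in> P"
      unfolding P_def using sub_Imp by blast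
    have PS: "P \<subseteq> S" unfolding S_def by blast
    have PN: "\<And>a. a \<in> P \<Longrightarrow> Neg a \<in> S" unfolding S_def by blast
    have gam: "\<forall>\<psi>\<in>\<Gamma>. sv E.vv \<psi> = (None, One)"
    proof
      fix \<psi> assume "\<psi> \<in> \<Gamma>"
      then have "\<psi> \<in> P" unfolding P_def using sub_self by blast
      then have "sv E.vv \<psi> = E.h \<psi>" using E.sv_h[OF Pcl PS PN] by blast
      moreover have "nm_deriv D \<psi>" using \<open>\<psi> \<in> \<Gamma>\<close> D(1) nm_deriv.hyp by blast
      ultimately show "sv E.vv \<psi> = (None, One)" using E.h_top by simp
    qed
    have "\<phi> \<in> P" unfolding P_def using sub_self by blast
    then have "sv E.vv \<phi> = E.h \<phi>" using E.sv_h[OF Pcl PS PN] by blast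
    moreover have "sv E.vv \<phi> = (None, One)" using tm E.vv_ta gam unfolding temporal_models_def by blast
    ultimately have "E.h \<phi> = (None, One)" by simp
    then have "nm_deriv D \<phi>" using E.h_top_iff by blast
    with D(2) show False by blast
  qed
qed


end
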